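(* In the line network setting of the context, let $\lambda_{\min}>0$ be such that (P) is feasible for both $\mathbf{G}_{\mathrm{HD}}$ and $\mathbf{G}_{\mathrm{FD}}$ with $t^*_{\mathrm{HD}}>0$. Let $\eta\in(0,1)$, $\delta^*_{\mathrm{HD}}=-\log(1-\eta)/t^*_{\mathrm{HD}}$, $\delta^*_{\mathrm{FD}}=-\log(1-\eta)/t^*_{\mathrm{FD}}$, and $\ell=\delta^*_{\mathrm{HD}}/\delta^*_{\mathrm{FD}}$. Then with $$\Lambda_1=\frac{R_a}{4(K+1)\left(\frac{R_a}{R_b}\right)^2+(2K+3)w\frac{R_a}{R_b}+w},\qquad \Lambda_2=\frac{R_a}{(K+1)\left(\frac{R_a}{R_b}\right)^2+(K+1)w\frac{R_a}{R_b}+w},$$ $$\ell=\begin{cases}\dfrac{1-w\lambda_{\min}\left(\frac1{R_b}+\frac1{R_a}\right)}{1-w\lambda_{\min}\left(\frac3{R_b}+\frac1{R_a}\right)}\cdot\dfrac{\frac{2(K+1)}{R_b}+\frac{Kw}{R_a}}{\frac{K+1}{R_b}+\frac{Kw}{R_a}}, & \lambda_{\min}\le\Lambda_1,\\[3ex] \dfrac{1-w\lambda_{\min}\left(\frac1{R_b}+\frac1{R_a}\right)}{1-w\lambda_{\min}\left(\frac{2K-1}{R_b}+\frac1{R_a}\right)}\cdot\dfrac{\frac{2(K+1)}{R_b}+\frac{2w}{R_a}}{\frac{K+1}{R_b}+\frac{Kw}{R_a}}, & \Lambda_1<\lambda_{\min}\le\Lambda_2,\\[3ex] 2\,\dfrac{1-w\lambda_{\min}\left(\frac{K}{R_b}+\frac1{R_a}\right)}{1-w\lambda_{\min}\left(\frac{2K-1}{R_b}+\frac1{R_a}\right)},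 & \lambda_{\min}>\Lambda_2.\end{cases}$$
   Context: General setting: a rooted tree with root the donor (vertex $0$), other internal vertices IAB nodes $1,\dots,K$, leaves $M$ user equipments (UEs); vertices $0,\dots,K$ are base stations (BSs). Each non-root vertex $v$ has a unique parent and the edge from its parent to $v$ is indexed by $v$; $\mathcal{E}$ is the edge set. For each UE $m$, $\mathsf{R}(m)$ is the set of edges on the path from $0$ to $m$ and $h_m=|\mathsf{R}(m)|$. $\mathbf{F}\in\{0,1\}^{|\mathcal{E}|\times M}$ has $F_{v,m}=1$ iff $v\in\mathsf{R}(m)$. $\mathbf{C}=\mathrm{diag}(c_v)$ with $c_v>0$ the capacity of edge $v$. Half-duplex scheduling matrix $\mathbf{G}_{\mathrm{HD}}\in\{0,1\}^{(K+1)\times|\mathcal{E}|}$: $[\mathbf{G}_{\mathrm{HD}}]_{k,v}=1$ iff BS $k$ is the parent or the child of edge $v$; full-duplex $\mathbf{G}_{\mathrm{FD}}$: $[\mathbf{G}_{\mathrm{FD}}]_{k,v}=1$ iff BS $k$ is the parent of edge $v$. Problem (P) for a given $\mathbf{G}$ and $\lambda_{\min}>0$: maximize $t$ over $(t,\boldsymbol{\lambda},\boldsymbol{\mu})\in\mathbb{R}\times\mathbb{R}^M\times\mathbb{R}^{|\mathcal{E}|}$ subject to $\boldsymbol{\lambda}\ge\lambda_{\min}\mathbf{1}$, $\mathbf{0}\le\boldsymbol{\mu}\le\mathbf{1}$, $t\ge0$, $\mathbf{G}\boldsymbol{\mu}\le\mathbf{1}$, and $c_v\mu_v-(\mathbf{F}\boldsymbol{\lambda})_v\ge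 t\,h_m$ for every UE $m$ and every $v\in\mathsf{R}(m)$; $t^*_{\mathrm{HD}}$, $t^*_{\mathrm{FD}}$ denote its optimal values for $\mathbf{G}_{\mathrm{HD}}$, $\mathbf{G}_{\mathrm{FD}}$. Line network: $K\ge2$; IAB node $k$ is the child of BS $k-1$ for $k=1,\dots,K$; each BS $k\in\{0,\dots,K\}$ has, in addition, exactly $w\ge1$ UE children and no other children. Each backhaul edge (into an IAB node) has capacity $R_b$ and each access edge (into a UE) has capacity $R_a$, where $0<R_a<R_b$. Additionally assume $wR_b\le (K+1)R_a$. The same $\mathbf{C}$ is used for both the HD and FD cases. *)

theory Defs
  imports Complex_Main
begin

text \<open>Line network: vertices are base stations BS k (k = 0 is the donor, 1..K the IAB nodes)
 and user equipments UE k j, the j-th UE child (j < w) of BS k.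
 Each non-root vertex v indexes the edge from its parent to v.\<close>

datatype vtx = BS nat | UE nat nat

definition BSs :: "nat \<Rightarrow> vtx set" where
  "BSs K = BS ` {0..K}"

definition UEs :: "nat \<Rightarrow> nat \<Rightarrow> vtx set" where
  "UEs K w = {UE k j | k j. k \<le> K \<and> j < w}"

definition edges :: "nat \<Rightarrow> nat \<Rightarrow> vtx set" where
  "edges K w = BS ` {1..K} \<union> UEs K w"

text \<open>Parent map (the value at the root BS 0 is irrelevant; it is set to BS 0 itself).\<close>
fun parent :: "vtx \<Rightarrow> vtx" where
  "parent (BS k) = BS (k - 1)"
| "parent (UE k j) = BS k"

definition route :: "nat \<Rightarrow> nat \<Rightarrow> vtx \<Rightarrow> vtx set" where
  "route K w m = {v \<in> edges K w. \<exists>n. (parent ^^ n) m = v}"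

fun cap :: "real \<Rightarrow> real \<Rightarrow> vtx \<Rightarrow> real" where
  "cap Ra Rb (BS _) = Rb"
| "cap Ra Rb (UE _ _) = Ra"

text \<open>Scheduling matrices as relations: G b v means [G]_{b,v} = 1.\<close>
definition G_HD :: "vtx \<Rightarrow> vtx \<Rightarrow> bool" where
  "G_HD b v \<longleftrightarrow> b = parent v \<or> b = v"

definition G_FD :: "vtx \<Rightarrow> vtx \<Rightarrow> bool" where
  "G_FD b v \<longleftrightarrow> b = parent v"

definition Flam :: "nat \<Rightarrow> nat \<Rightarrow> (vtx \<Rightarrow> real) \<Rightarrow> vtx \<Rightarrow> real" where
  "Flam K w lam v = (\<Sum>m\<in>{m \<in> UEs K w. v \<in> route K w m}. lam m)"

definition feasibleP ::
  "nat \<Rightarrow> nat \<Rightarrow> real \<Rightarrow> real \<Rightarrow> (vtx \<Rightarrow> vtx \<Rightarrow> bool) \<Rightarrow> real \<Rightarrow>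
   real \<Rightarrow> (vtx \<Rightarrow> real) \<Rightarrow> (vtx \<Rightarrow> real) \<Rightarrow> bool" where
  "feasibleP K w Ra Rb G lmin t lam mu \<longleftrightarrow>
     (\<forall>m\<in>UEs K w. lmin \<le> lam m) \<and>
     (\<forall>v\<in>edges K w. 0 \<le> mu v \<and> mu v \<le> 1) \<and>
     0 \<le> t \<and>
     (\<forall>b\<in>BSs K. (\<Sum>v\<in>{v \<in> edges K w. G b v}. mu v) \<le> 1) \<and>
     (\<forall>m\<in>UEs K w. \<forall>v\<in>route K w m.
        cap Ra Rb v * mu v - Flam K w lam v \<ge> t * real (card (route K w m)))"

definition P_feasible ::
  "nat \<Rightarrow> nat \<Rightarrow> real \<Rightarrow> real \<Rightarrow> (vtx \<Rightarrow> vtx \<Rightarrow> bool) \<Rightarrow> real \<Rightarrow> bool" where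
  "P_feasible K w Ra Rb G lmin \<longleftrightarrow> (\<exists>t lam mu. feasibleP K w Ra Rb G lmin t lam mu)"

definition opt_val ::
  "nat \<Rightarrow> nat \<Rightarrow> real \<Rightarrow> real \<Rightarrow> (vtx \<Rightarrow> vtx \<Rightarrow> bool) \<Rightarrow> real \<Rightarrow> real" where
  "opt_val K w Ra Rb G lmin = Sup {t. \<exists>lam mu. feasibleP K w Ra Rb G lmin t lam mu}"

definition Lambda1 :: "nat \<Rightarrow> nat \<Rightarrow> real \<Rightarrow> real \<Rightarrow> real" where
  "Lambda1 K w Ra Rb = Ra / (4 * (real K + 1) * (Ra / Rb)^2
      + (2 * real K + 3) * real w * (Ra / Rb) + real w)"

definition Lambda2 :: "nat \<Rightarrow> nat \<Rightarrow> real \<Rightarrow> real \<Rightarrow> real" where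
  "Lambda2 K w Ra Rb = Ra / ((real K + 1) * (Ra / Rb)^2
      + (real K + 1) * real w * (Ra / Rb) + real w)"

end

theory Submission
  imports Defs
begin

lemma parent_pow_UE: "(parent ^^ n) (UE k j) = (if n = 0 then UE k j else BS (k - (n - 1)))"
  by (induction n) auto

lemma route_UE:
  assumes "k \<le> K" "j < w"
  shows "route K w (UE k j) = insert (UE k j) (BS ` {1..k})"
proof (rule set_eqI)
  fix v
  show "v \<in> route K w (UE k j) \<longleftrightarrow> v \<in> insert (UE k j) (BS ` {1..k})"
  proof
    assume "v \<in> route K w (UE k j)"
    then obtain n where v: "v \<in> edges K w" "(parent ^^ n) (UE k j) = v"
      unfolding route_def by auto
    show "v \<in> insert (UE k j) (BS ` {1..k})"
    proof (cases "n = 0")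
      case True then show ?thesis using v by (simp add: parent_pow_UE)
    next
      case False
      then have "v = BS (k - (n - 1))" using v by (simp add: parent_pow_UE)
      moreover have "1 \<le> k - (n - 1)" using v(1) calculation unfolding edges_def UEs_def by auto
      ultimately show ?thesis by auto
    qed
  next
    assume h: "v \<in> insert (UE k j) (BS ` {1..k})"
    show "v \<in> route K w (UE k j)"
    proof (cases "v = UE k j")
      case True
      then show ?thesis unfolding route_def edges_def UEs_def using assms
        by (auto intro!: exI[of _ 0])
    next
      case False
      then obtain i where i: "v = BS i" "1 \<le> i" "i \<le> k" using h by auto
      have "(parent ^^ (k - i + 1)) (UE k j) = BS i" using i by (simp add: parent_pow_UE)
      then have "\<exists>n. (parent ^^ n) (UE k j) = BS i" by blast
      then show ?thesis unfolding route_def edges_def using i assms by auto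
    qed
  qed
qed

lemma card_route_UE:
  assumes "k \<le> K" "j < w"
  shows "card (route K w (UE k j)) = k + 1"
proof -
  have "card (BS ` {1..k}) = k" by (simp add: card_image inj_on_def)
  then show ?thesis using route_UE[OF assms] by (simp add: card_insert_if image_iff)
qed

lemma UEs_mem: "UE k j \<in> UEs K w \<longleftrightarrow> k \<le> K \<and> j < w"
  unfolding UEs_def by auto

lemma BS_notin_UEs: "BS i \<notin> UEs K w"
  unfolding UEs_def by auto

lemma users_BS:
  assumes "1 \<le> i"
  shows "{m \<in> UEs K w. BS i \<in> route K w m} = (\<lambda>(k,j). UE k j) ` ({i..K} \<times> {..<w})"
proof (rule set_eqI)
  fix m
  show "m \<in> {m \<in> UEs K w. BS i \<in> route K w m} \<longleftrightarrow> m \<in> (\<lambda>(k,j). UE k j) ` ({i..K} \<times> {..<w})"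
  proof
    assume "m \<in> {m \<in> UEs K w. BS i \<in> route K w m}"
    then obtain k j where m: "m = UE k j" "k \<le> K" "j < w" "BS i \<in> route K w (UE k j)"
      unfolding UEs_def by auto
    then have "i \<le> k" using route_UE[OF m(2,3)] by auto
    then show "m \<in> (\<lambda>(k,j). UE k j) ` ({i..K} \<times> {..<w})" using m by auto
  next
    assume "m \<in> (\<lambda>(k,j). UE k j) ` ({i..K} \<times> {..<w})"
    then obtain k j where m: "m = UE k j" "i \<le> k" "k \<le> K" "j < w" by auto
    then show "m \<in> {m \<in> UEs K w. BS i \<in> route K w m}"
      using route_UE[OF m(3,4)] assms by (auto simp: UEs_def)
  qed
qed

lemma card_users_BS:
  assumes "1 \<le> i"
  shows "card {m \<in> UEs K w. BS i \<in> route K w m} = (K + 1 - i) * w"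
proof -
  have "inj_on (\<lambda>(k,j). UE k j) ({i..K} \<times> {..<w})" by (auto simp: inj_on_def)
  then show ?thesis unfolding users_BS[OF assms] by (simp add: card_image card_cartesian_product)
qed

lemma users_UE:
  assumes "k \<le> K" "j < w"
  shows "{m \<in> UEs K w. UE k j \<in> route K w m} = {UE k j}"
proof (rule set_eqI)
  fix m
  show "m \<in> {m \<in> UEs K w. UE k j \<in> route K w m} \<longleftrightarrow> m \<in> {UE k j}"
  proof
    assume "m \<in> {m \<in> UEs K w. UE k j \<in> route K w m}"
    then obtain k' j' where m: "m = UE k' j'" "k' \<le> K" "j' < w" "UE k j \<in> route K w (UE k' j')"
      unfolding UEs_def by auto
    then show "m \<in> {UE k j}" using route_UE[OF m(2,3)] by auto
  next
    assume "m \<in> {UE k j}"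
    then show "m \<in> {m \<in> UEs K w. UE k j \<in> route K w m}"
      using route_UE[OF assms] assms by (auto simp: UEs_def)
  qed
qed

lemma Flam_UE: "k \<le> K \<Longrightarrow> j < w \<Longrightarrow> Flam K w lam (UE k j) = lam (UE k j)"
  unfolding Flam_def by (simp add: users_UE)

lemma Flam_BS_ge:
  assumes "1 \<le> i" "\<forall>m\<in>UEs K w. l \<le> lam m"
  shows "Flam K w lam (BS i) \<ge> real ((K + 1 - i) * w) * l"
proof -
  have fin: "finite {m \<in> UEs K w. BS i \<in> route K w m}"
    unfolding users_BS[OF assms(1)] by simp
  have "(\<Sum>m\<in>{m \<in> UEs K w. BS i \<in> route K w m}. l) \<le> Flam K w lam (BS i)"
    unfolding Flam_def by (rule sum_mono) (use assms(2) in auto)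
  then show ?thesis using card_users_BS[OF assms(1), of K w] by simp
qed

lemma Flam_BS_const:
  assumes "1 \<le> i"
  shows "Flam K w (\<lambda>_. l) (BS i) = real ((K + 1 - i) * w) * l"
  unfolding Flam_def using card_users_BS[OF assms, of K w] by simp

lemma HD_set_mid:
  assumes "1 \<le> k" "k < K"
  shows "{v \<in> edges K w. G_HD (BS k) v} = insert (BS k) (insert (BS (Suc k)) (UE k ` {..<w}))"
  using assms unfolding edges_def UEs_def G_HD_def
  apply (auto)
  done

lemma HD_set_0:
  assumes "1 \<le> K"
  shows "{v \<in> edges K w. G_HD (BS 0) v} = insert (BS 1) (UE 0 ` {..<w})"
  using assms unfolding edges_def UEs_def G_HD_def by auto

lemma HD_set_K:
  assumes "1 \<le> K"
  shows "{v \<in> edges K w. G_HD (BS K) v} = insert (BS K) (UE K ` {..<w})"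
  using assms unfolding edges_def UEs_def G_HD_def by auto

lemma FD_set_lt:
  assumes "k < K"
  shows "{v \<in> edges K w. G_FD (BS k) v} = insert (BS (Suc k)) (UE k ` {..<w})"
  using assms unfolding edges_def UEs_def G_FD_def by auto

lemma FD_set_K:
  shows "{v \<in> edges K w. G_FD (BS K) v} = UE K ` {..<w}"
  unfolding edges_def UEs_def G_FD_def by auto

lemma mu_BS_lb:
  assumes f: "feasibleP K w Ra Rb G lmin t lam mu" and "0 < Rb" and "1 \<le> i" "i \<le> K" "1 \<le> w"
  shows "mu (BS i) \<ge> (t * (real K + 1) + real ((K + 1 - i) * w) * lmin) / Rb"
proof -
  have m: "UE K 0 \<in> UEs K w" using assms by (simp add: UEs_mem)
  have v: "BS i \<in> route K w (UE K 0)" using route_UE[of K K 0 w] assms by auto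
  have "Rb * mu (BS i) - Flam K w lam (BS i) \<ge> t * real (K + 1)"
    using f m v card_route_UE[of K K 0 w] assms unfolding feasibleP_def by force
  moreover have "Flam K w lam (BS i) \<ge> real ((K + 1 - i) * w) * lmin"
    using Flam_BS_ge[OF assms(3)] f unfolding feasibleP_def by blast
  ultimately show ?thesis using assms(2) by (simp add: field_simps)
qed

lemma mu_UE_lb:
  assumes f: "feasibleP K w Ra Rb G lmin t lam mu" and "0 < Ra" and "k \<le> K" "j < w"
  shows "mu (UE k j) \<ge> (t * (real k + 1) + lmin) / Ra"
proof -
  have m: "UE k j \<in> UEs K w" using assms by (simp add: UEs_mem)
  have v: "UE k j \<in> route K w (UE k j)" using route_UE[of k K j w] assms by auto
  have "Ra * mu (UE k j) - Flam K w lam (UE k j) \<ge> t * real (k + 1)"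
    using f m v card_route_UE[of k K j w] assms unfolding feasibleP_def by force
  moreover have "lam (UE k j) \<ge> lmin" using f m unfolding feasibleP_def by blast
  ultimately show ?thesis using assms(2) Flam_UE[OF assms(3,4)] by (simp add: field_simps)
qed

lemma sum_UE: "(\<Sum>v\<in>UE k ` {..<w}. f v) = (\<Sum>j<w. f (UE k j))"
  by (simp add: sum.reindex inj_on_def)

lemma HD_ub:
  assumes f: "feasibleP K w Ra Rb G_HD lmin t lam mu" and "0 < Ra" "0 < Rb" "1 \<le> w"
    and "1 \<le> k" "k < K"
  shows "t * (2 * (real K + 1) / Rb + real w * (real k + 1) / Ra)
     + real w * lmin * ((2 * real K - 2 * real k + 1) / Rb + 1 / Ra) \<le> 1"
proof -
  have b: "BS k \<in> BSs K" using assms unfolding BSs_def by auto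
  have "(\<Sum>v\<in>{v \<in> edges K w. G_HD (BS k) v}. mu v) \<le> 1" using f b unfolding feasibleP_def by blast
  then have s: "mu (BS k) + mu (BS (Suc k)) + (\<Sum>j<w. mu (UE k j)) \<le> 1"
    using assms by (simp add: HD_set_mid sum_UE image_iff)
  have 1: "mu (BS k) \<ge> (t * (real K + 1) + real ((K + 1 - k) * w) * lmin) / Rb"
    using mu_BS_lb[OF f] assms by auto
  have 2: "mu (BS (Suc k)) \<ge> (t * (real K + 1) + real ((K + 1 - Suc k) * w) * lmin) / Rb"
    using mu_BS_lb[OF f, where i="Suc k"] assms by auto
  have 3: "(\<Sum>j<w. mu (UE k j)) \<ge> real w * ((t * (real k + 1) + lmin) / Ra)"
    using sum_mono[of "{..<w}" "\<lambda>j. (t * (real k + 1) + lmin) / Ra" "\<lambda>j. mu (UE k j)"]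
      mu_UE_lb[OF f] assms by auto
  have e1: "real ((K + 1 - k) * w) = (real K + 1 - real k) * real w" using assms by (simp add: of_nat_diff)
  have e2: "real ((K + 1 - Suc k) * w) = (real K - real k) * real w" using assms by (simp add: of_nat_diff)
  have "t * (2 * (real K + 1) / Rb + real w * (real k + 1) / Ra)
     + real w * lmin * ((2 * real K - 2 * real k + 1) / Rb + 1 / Ra)
     = (t * (real K + 1) + (real K + 1 - real k) * real w * lmin) / Rb
       + (t * (real K + 1) + (real K - real k) * real w * lmin) / Rb
       + real w * ((t * (real k + 1) + lmin) / Ra)"
    using assms(2,3) by (simp add: field_simps)
  also have "\<dots> \<le> 1" using s 1 2 3 unfolding e1 e2 by linarith
  finally show ?thesis .
qed

lemma FD_ub:
  assumes f: "feasibleP K w Ra Rb G_FD lmin t lam mu" and "0 < Ra" "0 < Rb" "1 \<le> w"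
    and "k < K"
  shows "t * ((real K + 1) / Rb + real w * (real k + 1) / Ra)
     + real w * lmin * ((real K - real k) / Rb + 1 / Ra) \<le> 1"
proof -
  have b: "BS k \<in> BSs K" using assms unfolding BSs_def by auto
  have "(\<Sum>v\<in>{v \<in> edges K w. G_FD (BS k) v}. mu v) \<le> 1" using f b unfolding feasibleP_def by blast
  then have s: "mu (BS (Suc k)) + (\<Sum>j<w. mu (UE k j)) \<le> 1"
    using assms by (simp add: FD_set_lt sum_UE image_iff)
  have 2: "mu (BS (Suc k)) \<ge> (t * (real K + 1) + real ((K + 1 - Suc k) * w) * lmin) / Rb"
    using mu_BS_lb[OF f, where i="Suc k"] assms by auto
  have 3: "(\<Sum>j<w. mu (UE k j)) \<ge> real w * ((t * (real k + 1) + lmin) / Ra)"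
    using sum_mono[of "{..<w}" "\<lambda>j. (t * (real k + 1) + lmin) / Ra" "\<lambda>j. mu (UE k j)"]
      mu_UE_lb[OF f] assms by auto
  have e2: "real ((K + 1 - Suc k) * w) = (real K - real k) * real w" using assms by (simp add: of_nat_diff)
  have "t * ((real K + 1) / Rb + real w * (real k + 1) / Ra)
     + real w * lmin * ((real K - real k) / Rb + 1 / Ra)
     = (t * (real K + 1) + (real K - real k) * real w * lmin) / Rb
       + real w * ((t * (real k + 1) + lmin) / Ra)"
    using assms(2,3) by (simp add: field_simps)
  also have "\<dots> \<le> 1" using s 2 3 unfolding e2 by linarith
  finally show ?thesis .
qed

lemma finite_edges: "finite (edges K w)"
proof -
  have "UEs K w = (\<lambda>(k,j). UE k j) ` ({..K} \<times> {..<w})" unfolding UEs_def by auto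
  then show ?thesis unfolding edges_def by simp
qed

definition mu0 :: "nat \<Rightarrow> nat \<Rightarrow> real \<Rightarrow> real \<Rightarrow> real \<Rightarrow> real \<Rightarrow> vtx \<Rightarrow> real" where
  "mu0 K w Ra Rb T l v = (case v of BS i \<Rightarrow> (T * (real K + 1) + real ((K + 1 - i) * w) * l) / Rb
                                 | UE k j \<Rightarrow> (T * (real k + 1) + l) / Ra)"

lemma feasible_mu0:
  assumes "0 \<le> T" "0 < l" "0 < Ra" "0 < Rb"
    and G: "\<And>v. G (parent v) v"
    and bs: "\<forall>b\<in>BSs K. (\<Sum>v\<in>{v \<in> edges K w. G b v}. mu0 K w Ra Rb T l v) \<le> 1"
  shows "feasibleP K w Ra Rb G l T (\<lambda>_. l) (mu0 K w Ra Rb T l)"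
proof -
  let ?mu = "mu0 K w Ra Rb T l"
  have nn: "\<And>v. 0 \<le> ?mu v" unfolding mu0_def using assms by (auto split: vtx.split)
  have le1: "?mu v \<le> 1" if v: "v \<in> edges K w" for v
  proof -
    have pb: "parent v \<in> BSs K" using v unfolding edges_def UEs_def BSs_def by auto
    have fin: "finite {u \<in> edges K w. G (parent v) u}" using finite_edges by simp
    have "?mu v \<le> (\<Sum>u\<in>{u \<in> edges K w. G (parent v) u}. ?mu u)"
      by (rule member_le_sum) (use v G nn fin in auto)
    also have "\<dots> \<le> 1" using bs pb by blast
    finally show ?thesis .
  qed
  have c: "cap Ra Rb v * ?mu v - Flam K w (\<lambda>_. l) v \<ge> T * real (card (route K w m))"
    if m: "m \<in> UEs K w" and v: "v \<in> route K w m" for m v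
  proof -
    obtain k j where mk: "m = UE k j" "k \<le> K" "j < w" using m unfolding UEs_def by auto
    have cr: "card (route K w m) = k + 1" using card_route_UE[OF mk(2,3)] mk by simp
    have "v = UE k j \<or> (\<exists>i. v = BS i \<and> 1 \<le> i \<and> i \<le> k)"
      using v route_UE[OF mk(2,3)] mk by auto
    then show ?thesis
    proof
      assume "v = UE k j"
      then show ?thesis using cr mk assms Flam_UE[OF mk(2,3)] by (simp add: mu0_def add.commute)
    next
      assume "\<exists>i. v = BS i \<and> 1 \<le> i \<and> i \<le> k"
      then obtain i where i: "v = BS i" "1 \<le> i" "i \<le> k" by auto
      have "cap Ra Rb v * ?mu v - Flam K w (\<lambda>_. l) v = T * (real K + 1)"
        using i assms Flam_BS_const[OF i(2), of K w l] by (simp add: mu0_def)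
      moreover have "T * real (k + 1) \<le> T * (real K + 1)"
        using assms mk by (intro mult_left_mono) auto
      ultimately show ?thesis using cr by simp
    qed
  qed
  show ?thesis unfolding feasibleP_def using assms nn le1 c bs by auto
qed

lemma affine_le:
  fixes a b c p q k :: real
  assumes "a + b * p \<le> c" "a + b * q \<le> c" "p \<le> k" "k \<le> q"
  shows "a + b * k \<le> c"
proof (cases "b \<ge> 0")
  case True
  then have "b * k \<le> b * q" using assms by (intro mult_left_mono) auto
  then show ?thesis using assms by linarith
next
  case False
  then have "b * k \<le> b * p" using assms by (intro mult_left_mono_neg) auto
  then show ?thesis using assms by linarith
qed

definition HDe :: "nat \<Rightarrow> nat \<Rightarrow> real \<Rightarrow> real \<Rightarrow> real \<Rightarrow> real \<Rightarrow> real \<Rightarrow> real" where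
  "HDe K w Ra Rb l t k = t * (2 * (real K + 1) / Rb + real w * (k + 1) / Ra)
     + real w * l * ((2 * real K - 2 * k + 1) / Rb + 1 / Ra)"

definition FDe :: "nat \<Rightarrow> nat \<Rightarrow> real \<Rightarrow> real \<Rightarrow> real \<Rightarrow> real \<Rightarrow> real \<Rightarrow> real" where
  "FDe K w Ra Rb l t k = t * ((real K + 1) / Rb + real w * (k + 1) / Ra)
     + real w * l * ((real K - k) / Rb + 1 / Ra)"

lemma HDe_aff: "HDe K w Ra Rb l t k = (t * (2 * (real K + 1) / Rb + real w / Ra)
     + real w * l * ((2 * real K + 1) / Rb + 1 / Ra)) + (t * real w / Ra - 2 * real w * l / Rb) * k"
  unfolding HDe_def by (simp add: algebra_simps add_divide_distrib diff_divide_distrib)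

lemma FDe_aff: "FDe K w Ra Rb l t k = (t * ((real K + 1) / Rb + real w / Ra)
     + real w * l * (real K / Rb + 1 / Ra)) + (t * real w / Ra - real w * l / Rb) * k"
  unfolding FDe_def by (simp add: algebra_simps add_divide_distrib diff_divide_distrib)

lemma HD_achieve:
  assumes "K \<ge> 2" "0 < Ra" "0 < Rb" "real w * Rb \<le> (real K + 1) * Ra" "0 < l" "0 \<le> T"
    and h1: "HDe K w Ra Rb l T 1 \<le> 1" and h2: "HDe K w Ra Rb l T (real K - 1) \<le> 1"
  shows "feasibleP K w Ra Rb G_HD l T (\<lambda>_. l) (mu0 K w Ra Rb T l)"
proof (rule feasible_mu0)
  show "\<And>v. G_HD (parent v) v" by (simp add: G_HD_def)
  have wr: "T * real w / Ra \<le> T * (real K + 1) / Rb"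
  proof -
    have "real w / Ra \<le> (real K + 1) / Rb" using assms by (simp add: field_simps)
    then have "T * (real w / Ra) \<le> T * ((real K + 1) / Rb)" using assms by (intro mult_left_mono) auto
    then show ?thesis by simp
  qed
  have x0: "0 \<le> real w * l" using assms by simp
  show "\<forall>b\<in>BSs K. (\<Sum>v\<in>{v \<in> edges K w. G_HD b v}. mu0 K w Ra Rb T l v) \<le> 1"
  proof
    fix b assume "b \<in> BSs K"
    then obtain k where b: "b = BS k" "k \<le> K" unfolding BSs_def by auto
    consider "k = 0" | "k = K" | "1 \<le> k \<and> k < K" using b assms by linarith
    then show "(\<Sum>v\<in>{v \<in> edges K w. G_HD b v}. mu0 K w Ra Rb T l v) \<le> 1"
    proof cases
      case 1
      then have "(\<Sum>v\<in>{v \<in> edges K w. G_HD b v}. mu0 K w Ra Rb T l v)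
          = (T * (real K + 1) + real K * real w * l) / Rb + real w * ((T + l) / Ra)"
        using b assms by (simp add: HD_set_0 sum_UE image_iff mu0_def)
      also have "\<dots> \<le> HDe K w Ra Rb l T 1"
      proof -
        have "HDe K w Ra Rb l T 1 = (T * (real K + 1) + real K * real w * l) / Rb + real w * ((T + l) / Ra)
           + (T * (real K + 1) / Rb + T * real w / Ra + real w * l * (real K - 1) / Rb)"
          unfolding HDe_def using assms by (simp add: field_simps)
        moreover have "0 \<le> T * (real K + 1) / Rb + T * real w / Ra + real w * l * (real K - 1) / Rb"
          using assms by (intro add_nonneg_nonneg divide_nonneg_pos mult_nonneg_nonneg) auto
        ultimately show ?thesis by linarith
      qed
      finally show ?thesis using h1 by linarith
    next
      case 2
      then have "(\<Sum>v\<in>{v \<in> edges K w. G_HD b v}. mu0 K w Ra Rb T l v)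
          = (T * (real K + 1) + real w * l) / Rb + real w * ((T * (real K + 1) + l) / Ra)"
        using b assms by (simp add: HD_set_K sum_UE image_iff mu0_def)
      also have "\<dots> \<le> HDe K w Ra Rb l T (real K - 1)"
      proof -
        have "HDe K w Ra Rb l T (real K - 1) = (T * (real K + 1) + real w * l) / Rb + real w * ((T * (real K + 1) + l) / Ra)
           + (T * (real K + 1) / Rb - T * real w / Ra + 2 * real w * l / Rb)"
          unfolding HDe_def using assms by (simp add: field_simps)
        moreover have "0 \<le> 2 * real w * l / Rb"
          using assms by (intro divide_nonneg_pos mult_nonneg_nonneg) auto
        moreover have "0 \<le> T * (real K + 1) / Rb - T * real w / Ra + 2 * real w * l / Rb"
          using wr calculation(2) by linarith
        ultimately show ?thesis by linarith
      qed
      finally show ?thesis using h2 by linarith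
    next
      case 3
      then have "(\<Sum>v\<in>{v \<in> edges K w. G_HD b v}. mu0 K w Ra Rb T l v)
          = (T * (real K + 1) + real ((K + 1 - k) * w) * l) / Rb
            + (T * (real K + 1) + real ((K + 1 - Suc k) * w) * l) / Rb
            + real w * ((T * (real k + 1) + l) / Ra)"
        using b assms by (simp add: HD_set_mid sum_UE image_iff mu0_def)
      also have "\<dots> = HDe K w Ra Rb l T (real k)"
      proof -
        have e1: "real ((K + 1 - k) * w) = (real K + 1 - real k) * real w" using 3 by (simp add: of_nat_diff)
        have e2: "real ((K + 1 - Suc k) * w) = (real K - real k) * real w" using 3 by (simp add: of_nat_diff)
        show ?thesis unfolding e1 e2 HDe_def using assms by (simp add: field_simps)
      qed
      also have "\<dots> \<le> 1"
        using affine_le[OF h1[unfolded HDe_aff] h2[unfolded HDe_aff], of "real k"] 3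
        unfolding HDe_aff by (simp add: of_nat_diff)
      finally show ?thesis .
    qed
  qed
qed (use assms in auto)

lemma FD_achieve:
  assumes "K \<ge> 2" "0 < Ra" "0 < Rb" "real w * Rb \<le> (real K + 1) * Ra" "0 < l" "0 \<le> T"
    and h1: "FDe K w Ra Rb l T 0 \<le> 1" and h2: "FDe K w Ra Rb l T (real K - 1) \<le> 1"
  shows "feasibleP K w Ra Rb G_FD l T (\<lambda>_. l) (mu0 K w Ra Rb T l)"
proof (rule feasible_mu0)
  show "\<And>v. G_FD (parent v) v" by (simp add: G_FD_def)
  have wr: "T * real w / Ra \<le> T * (real K + 1) / Rb"
  proof -
    have "real w / Ra \<le> (real K + 1) / Rb" using assms by (simp add: field_simps)
    then have "T * (real w / Ra) \<le> T * ((real K + 1) / Rb)" using assms by (intro mult_left_mono) auto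
    then show ?thesis by simp
  qed
  show "\<forall>b\<in>BSs K. (\<Sum>v\<in>{v \<in> edges K w. G_FD b v}. mu0 K w Ra Rb T l v) \<le> 1"
  proof
    fix b assume "b \<in> BSs K"
    then obtain k where b: "b = BS k" "k \<le> K" unfolding BSs_def by auto
    consider "k = K" | "k < K" using b assms by linarith
    then show "(\<Sum>v\<in>{v \<in> edges K w. G_FD b v}. mu0 K w Ra Rb T l v) \<le> 1"
    proof cases
      case 1
      then have "(\<Sum>v\<in>{v \<in> edges K w. G_FD b v}. mu0 K w Ra Rb T l v)
          = real w * ((T * (real K + 1) + l) / Ra)"
        using b assms by (simp add: FD_set_K sum_UE image_iff mu0_def)
      also have "\<dots> \<le> FDe K w Ra Rb l T (real K - 1)"
      proof -
        have "FDe K w Ra Rb l T (real K - 1) = real w * ((T * (real K + 1) + l) / Ra)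
           + (T * (real K + 1) / Rb - T * real w / Ra + real w * l / Rb)"
          unfolding FDe_def using assms by (simp add: field_simps)
        moreover have "0 \<le> real w * l / Rb"
          using assms by (intro divide_nonneg_pos mult_nonneg_nonneg) auto
        moreover have "0 \<le> T * (real K + 1) / Rb - T * real w / Ra + real w * l / Rb"
          using wr calculation(2) by linarith
        ultimately show ?thesis by linarith
      qed
      finally show ?thesis using h2 by linarith
    next
      case 2
      then have "(\<Sum>v\<in>{v \<in> edges K w. G_FD b v}. mu0 K w Ra Rb T l v)
          = (T * (real K + 1) + real ((K + 1 - Suc k) * w) * l) / Rb
            + real w * ((T * (real k + 1) + l) / Ra)"
        using b assms by (simp add: FD_set_lt sum_UE image_iff mu0_def)
      also have "\<dots> = FDe K w Ra Rb l T (real k)"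
      proof -
        have e2: "real ((K + 1 - Suc k) * w) = (real K - real k) * real w" using 2 by (simp add: of_nat_diff)
        show ?thesis unfolding e2 FDe_def using assms by (simp add: field_simps)
      qed
      also have "\<dots> \<le> 1"
        using affine_le[OF h1[unfolded FDe_aff] h2[unfolded FDe_aff], of "real k"] 2
        unfolding FDe_aff by (simp add: of_nat_diff)
      finally show ?thesis .
    qed
  qed
qed (use assms in auto)

lemma le_div_iff_expr:
  fixes t D c :: real
  assumes "0 < D"
  shows "t * D + c \<le> 1 \<longleftrightarrow> t \<le> (1 - c) / D"
  using assms by (simp add: pos_le_divide_eq algebra_simps)

lemma Sup_max:
  fixes S :: "real set"
  assumes "T \<in> S" "\<And>t. t \<in> S \<Longrightarrow> t \<le> T"
  shows "Sup S = T"
  by (rule cSup_eq_maximum) (use assms in auto)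

definition fH :: "nat \<Rightarrow> nat \<Rightarrow> real \<Rightarrow> real \<Rightarrow> real \<Rightarrow> real \<Rightarrow> real" where
  "fH K w Ra Rb l k = (1 - real w * l * ((2 * real K - 2 * k + 1) / Rb + 1 / Ra))
      / (2 * (real K + 1) / Rb + real w * (k + 1) / Ra)"

definition fF :: "nat \<Rightarrow> nat \<Rightarrow> real \<Rightarrow> real \<Rightarrow> real \<Rightarrow> real \<Rightarrow> real" where
  "fF K w Ra Rb l k = (1 - real w * l * ((real K - k) / Rb + 1 / Ra))
      / ((real K + 1) / Rb + real w * (k + 1) / Ra)"

lemma HDe_iff:
  assumes "0 < Ra" "0 < Rb" "0 \<le> k"
  shows "HDe K w Ra Rb l t k \<le> 1 \<longleftrightarrow> t \<le> fH K w Ra Rb l k"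
proof -
  have "0 < 2 * (real K + 1) / Rb + real w * (k + 1) / Ra" using assms
    by (intro add_pos_nonneg divide_pos_pos divide_nonneg_pos mult_nonneg_nonneg) auto
  then show ?thesis unfolding HDe_def fH_def by (rule le_div_iff_expr)
qed

lemma FDe_iff:
  assumes "0 < Ra" "0 < Rb" "0 \<le> k"
  shows "FDe K w Ra Rb l t k \<le> 1 \<longleftrightarrow> t \<le> fF K w Ra Rb l k"
proof -
  have "0 < (real K + 1) / Rb" using assms by simp
  moreover have "0 \<le> real w * (k + 1) / Ra" using assms by simp
  ultimately have "0 < (real K + 1) / Rb + real w * (k + 1) / Ra" by linarith
  then show ?thesis unfolding FDe_def fF_def by (rule le_div_iff_expr)
qed

lemma opt_HD:
  assumes "K \<ge> 2" "w \<ge> 1" "0 < Ra" "0 < Rb" "real w * Rb \<le> (real K + 1) * Ra" "0 < l"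
    and "P_feasible K w Ra Rb G_HD l"
  shows "opt_val K w Ra Rb G_HD l = min (fH K w Ra Rb l 1) (fH K w Ra Rb l (real K - 1))"
proof -
  let ?T = "min (fH K w Ra Rb l 1) (fH K w Ra Rb l (real K - 1))"
  have ub: "t \<le> fH K w Ra Rb l 1 \<and> t \<le> fH K w Ra Rb l (real K - 1)"
    if "feasibleP K w Ra Rb G_HD l t lam mu" for t lam mu
  proof -
    have "HDe K w Ra Rb l t (real 1) \<le> 1"
      using HD_ub[OF that assms(3,4,2), of 1] assms unfolding HDe_def by simp
    moreover have "HDe K w Ra Rb l t (real (K - 1)) \<le> 1"
      using HD_ub[OF that assms(3,4,2), of "K - 1"] assms unfolding HDe_def by simp
    ultimately show ?thesis using HDe_iff[OF assms(3,4)] assms by (simp add: of_nat_diff)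
  qed
  obtain t0 lam0 mu0' where f0: "feasibleP K w Ra Rb G_HD l t0 lam0 mu0'"
    using assms(7) unfolding P_feasible_def by blast
  have "0 \<le> t0" using f0 unfolding feasibleP_def by simp
  then have T0: "0 \<le> ?T" using ub[OF f0] by linarith
  have "feasibleP K w Ra Rb G_HD l ?T (\<lambda>_. l) (mu0 K w Ra Rb ?T l)"
    by (rule HD_achieve) (use assms T0 HDe_iff[OF assms(3,4)] in auto)
  then show ?thesis unfolding opt_val_def
    by (intro Sup_max) (use ub in auto)
qed

lemma opt_FD:
  assumes "K \<ge> 2" "w \<ge> 1" "0 < Ra" "0 < Rb" "real w * Rb \<le> (real K + 1) * Ra" "0 < l"
    and "P_feasible K w Ra Rb G_FD l"
  shows "opt_val K w Ra Rb G_FD l = min (fF K w Ra Rb l 0) (fF K w Ra Rb l (real K - 1))"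
proof -
  let ?T = "min (fF K w Ra Rb l 0) (fF K w Ra Rb l (real K - 1))"
  have ub: "t \<le> fF K w Ra Rb l 0 \<and> t \<le> fF K w Ra Rb l (real K - 1)"
    if "feasibleP K w Ra Rb G_FD l t lam mu" for t lam mu
  proof -
    have "FDe K w Ra Rb l t (real 0) \<le> 1"
      using FD_ub[OF that assms(3,4,2), of 0] assms unfolding FDe_def by simp
    moreover have "FDe K w Ra Rb l t (real (K - 1)) \<le> 1"
      using FD_ub[OF that assms(3,4,2), of "K - 1"] assms unfolding FDe_def by simp
    ultimately show ?thesis using FDe_iff[OF assms(3,4)] assms by (simp add: of_nat_diff)
  qed
  obtain t0 lam0 mu0' where f0: "feasibleP K w Ra Rb G_FD l t0 lam0 mu0'"
    using assms(7) unfolding P_feasible_def by blast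
  have "0 \<le> t0" using f0 unfolding feasibleP_def by simp
  then have T0: "0 \<le> ?T" using ub[OF f0] by linarith
  have "feasibleP K w Ra Rb G_FD l ?T (\<lambda>_. l) (mu0 K w Ra Rb ?T l)"
    by (rule FD_achieve) (use assms T0 FDe_iff[OF assms(3,4)] in auto)
  then show ?thesis unfolding opt_val_def
    by (intro Sup_max) (use ub in auto)
qed

lemma polyH:
  fixes a b k w l :: real
  shows "(1 - w * l * ((2 * k - 2 * (k - 1) + 1) * a + b)) * (2 * (k + 1) * a + w * (1 + 1) * b)
       - (1 - w * l * ((2 * k - 2 * 1 + 1) * a + b)) * (2 * (k + 1) * a + w * (k - 1 + 1) * b)
       = (k - 2) * w * (l * (4 * (k + 1) * a^2 + w * (2 * k + 3) * a * b + w * b^2) - b)"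
  by (simp add: algebra_simps power2_eq_square)

lemma polyF:
  fixes a b k w l :: real
  shows "(1 - w * l * ((k - (k - 1)) * a + b)) * ((k + 1) * a + w * (0 + 1) * b)
       - (1 - w * l * ((k - 0) * a + b)) * ((k + 1) * a + w * (k - 1 + 1) * b)
       = (k - 1) * w * (l * ((k + 1) * a^2 + w * (k + 1) * a * b + w * b^2) - b)"
  by (simp add: algebra_simps power2_eq_square)

lemma fH_ab: "fH K w Ra Rb l k = (1 - real w * l * ((2 * real K - 2 * k + 1) * (1 / Rb) + 1 / Ra))
      / (2 * (real K + 1) * (1 / Rb) + real w * (k + 1) * (1 / Ra))"
  by (simp add: fH_def)

lemma fF_ab: "fF K w Ra Rb l k = (1 - real w * l * ((real K - k) * (1 / Rb) + 1 / Ra))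
      / ((real K + 1) * (1 / Rb) + real w * (k + 1) * (1 / Ra))"
  by (simp add: fF_def)

lemma L1_ab:
  assumes "0 < Ra" "0 < Rb"
  shows "Lambda1 K w Ra Rb = (1 / Ra) / (4 * (real K + 1) * (1 / Rb)^2 + real w * (2 * real K + 3) * (1 / Rb) * (1 / Ra) + real w * (1 / Ra)^2)"
proof -
  have "0 < 4 * (real K + 1) * (Ra / Rb)^2 + (2 * real K + 3) * real w * (Ra / Rb) + real w + 1" using assms
    by (intro add_nonneg_pos add_nonneg_nonneg mult_nonneg_nonneg) auto
  show ?thesis unfolding Lambda1_def using assms by (simp add: field_simps power2_eq_square)
qed

lemma frac_cmp:
  fixes N1 N2 D1 D2 :: real
  assumes "0 < D1" "0 < D2" "N2 * D1 \<le> N1 * D2"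
  shows "N2 / D2 \<le> N1 / D1"
  using assms by (simp add: field_simps)

lemma L2_ab:
  assumes "0 < Ra" "0 < Rb"
  shows "Lambda2 K w Ra Rb = (1 / Ra) / ((real K + 1) * (1 / Rb)^2 + real w * (real K + 1) * (1 / Rb) * (1 / Ra) + real w * (1 / Ra)^2)"
proof -
  have "0 < (real K + 1) * (Ra / Rb)^2 + (real K + 1) * real w * (Ra / Rb) + real w + 1" using assms
    by (intro add_nonneg_pos add_nonneg_nonneg mult_nonneg_nonneg) auto
  show ?thesis unfolding Lambda2_def using assms by (simp add: field_simps power2_eq_square)
qed

lemma thrH:
  fixes a b k w l :: real
  assumes "0 < a" "0 < b" "2 \<le> k" "1 \<le> w" "0 < l"
  defines "Q \<equiv> 4 * (k + 1) * a^2 + w * (2 * k + 3) * a * b + w * b^2"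
  shows "l \<le> b / Q \<Longrightarrow>
     (1 - w * l * ((2 * k - 2 * (k - 1) + 1) * a + b)) / (2 * (k + 1) * a + w * (k - 1 + 1) * b)
     \<le> (1 - w * l * ((2 * k - 2 * 1 + 1) * a + b)) / (2 * (k + 1) * a + w * (1 + 1) * b)"
    and "b / Q < l \<Longrightarrow>
     (1 - w * l * ((2 * k - 2 * 1 + 1) * a + b)) / (2 * (k + 1) * a + w * (1 + 1) * b)
     \<le> (1 - w * l * ((2 * k - 2 * (k - 1) + 1) * a + b)) / (2 * (k + 1) * a + w * (k - 1 + 1) * b)"
proof -
  have Q: "0 < Q" unfolding Q_def using assms by (intro add_pos_nonneg) auto
  have D1: "0 < 2 * (k + 1) * a + w * (1 + 1) * b" using assms by (intro add_pos_nonneg) auto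
  have D2: "0 < 2 * (k + 1) * a + w * (k - 1 + 1) * b" using assms by (intro add_pos_nonneg) auto
  have P: "0 \<le> (k - 2) * w" using assms by simp
  note pH = polyH[of w l k a b, folded Q_def]
  show "(1 - w * l * ((2 * k - 2 * (k - 1) + 1) * a + b)) / (2 * (k + 1) * a + w * (k - 1 + 1) * b)
     \<le> (1 - w * l * ((2 * k - 2 * 1 + 1) * a + b)) / (2 * (k + 1) * a + w * (1 + 1) * b)"
    if "l \<le> b / Q"
  proof (rule frac_cmp[OF D1 D2])
    have "l * Q - b \<le> 0" using that Q by (simp add: le_divide_eq)
    then have "(k - 2) * w * (l * Q - b) \<le> 0" using P by (simp add: mult_nonneg_nonpos)
    then show "(1 - w * l * ((2 * k - 2 * (k - 1) + 1) * a + b)) * (2 * (k + 1) * a + w * (1 + 1) * b)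
      \<le> (1 - w * l * ((2 * k - 2 * 1 + 1) * a + b)) * (2 * (k + 1) * a + w * (k - 1 + 1) * b)"
      using pH by linarith
  qed
  show "(1 - w * l * ((2 * k - 2 * 1 + 1) * a + b)) / (2 * (k + 1) * a + w * (1 + 1) * b)
     \<le> (1 - w * l * ((2 * k - 2 * (k - 1) + 1) * a + b)) / (2 * (k + 1) * a + w * (k - 1 + 1) * b)"
    if "b / Q < l"
  proof (rule frac_cmp[OF D2 D1])
    have "l * Q - b \<ge> 0" using that Q by (simp add: divide_less_eq)
    then have "(k - 2) * w * (l * Q - b) \<ge> 0" using P by simp
    then show "(1 - w * l * ((2 * k - 2 * 1 + 1) * a + b)) * (2 * (k + 1) * a + w * (k - 1 + 1) * b)
      \<le> (1 - w * l * ((2 * k - 2 * (k - 1) + 1) * a + b)) * (2 * (k + 1) * a + w * (1 + 1) * b)"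
      using pH by linarith
  qed
qed

lemma thrF:
  fixes a b k w l :: real
  assumes "0 < a" "0 < b" "2 \<le> k" "1 \<le> w" "0 < l"
  defines "Q \<equiv> (k + 1) * a^2 + w * (k + 1) * a * b + w * b^2"
  shows "l \<le> b / Q \<Longrightarrow>
     (1 - w * l * ((k - (k - 1)) * a + b)) / ((k + 1) * a + w * (k - 1 + 1) * b)
     \<le> (1 - w * l * ((k - 0) * a + b)) / ((k + 1) * a + w * (0 + 1) * b)"
    and "b / Q < l \<Longrightarrow>
     (1 - w * l * ((k - 0) * a + b)) / ((k + 1) * a + w * (0 + 1) * b)
     \<le> (1 - w * l * ((k - (k - 1)) * a + b)) / ((k + 1) * a + w * (k - 1 + 1) * b)"
proof -
  have Q: "0 < Q" unfolding Q_def using assms by (intro add_pos_nonneg) auto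
  have D1: "0 < (k + 1) * a + w * (0 + 1) * b" using assms by (intro add_pos_nonneg) auto
  have D2: "0 < (k + 1) * a + w * (k - 1 + 1) * b" using assms by (intro add_pos_nonneg) auto
  have P: "0 \<le> (k - 1) * w" using assms by simp
  note pF = polyF[of w l k a b, folded Q_def]
  show "(1 - w * l * ((k - (k - 1)) * a + b)) / ((k + 1) * a + w * (k - 1 + 1) * b)
     \<le> (1 - w * l * ((k - 0) * a + b)) / ((k + 1) * a + w * (0 + 1) * b)"
    if "l \<le> b / Q"
  proof (rule frac_cmp[OF D1 D2])
    have "l * Q - b \<le> 0" using that Q by (simp add: le_divide_eq)
    then have "(k - 1) * w * (l * Q - b) \<le> 0" using P by (simp add: mult_nonneg_nonpos)
    then show "(1 - w * l * ((k - (k - 1)) * a + b)) * ((k + 1) * a + w * (0 + 1) * b)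
      \<le> (1 - w * l * ((k - 0) * a + b)) * ((k + 1) * a + w * (k - 1 + 1) * b)"
      using pF by linarith
  qed
  show "(1 - w * l * ((k - 0) * a + b)) / ((k + 1) * a + w * (0 + 1) * b)
     \<le> (1 - w * l * ((k - (k - 1)) * a + b)) / ((k + 1) * a + w * (k - 1 + 1) * b)"
    if "b / Q < l"
  proof (rule frac_cmp[OF D2 D1])
    have "l * Q - b \<ge> 0" using that Q by (simp add: divide_less_eq)
    then have "(k - 1) * w * (l * Q - b) \<ge> 0" using P by simp
    then show "(1 - w * l * ((k - 0) * a + b)) * ((k + 1) * a + w * (k - 1 + 1) * b)
      \<le> (1 - w * l * ((k - (k - 1)) * a + b)) * ((k + 1) * a + w * (0 + 1) * b)"
      using pF by linarith
  qed
qed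

lemma ratio_swap:
  fixes n1 d1 n2 d2 :: real
  shows "(n1 / d1) / (n2 / d2) = (n1 / n2) * (d2 / d1)"
  by (simp add: divide_inverse inverse_mult_distrib mult_ac)

theorem corollary1:
  fixes K w :: nat and Ra Rb lmin eta :: real
  assumes "K \<ge> 2" and "w \<ge> 1"
    and "0 < Ra" and "Ra < Rb"
    and "real w * Rb \<le> (real K + 1) * Ra"
    and "lmin > 0"
    and "P_feasible K w Ra Rb G_HD lmin"
    and "P_feasible K w Ra Rb G_FD lmin"
    and "opt_val K w Ra Rb G_HD lmin > 0"
    and "0 < eta" and "eta < 1"
  shows "(let tHD = opt_val K w Ra Rb G_HD lmin;
              tFD = opt_val K w Ra Rb G_FD lmin;
              dHD = - ln (1 - eta) / tHD;
              dFD = - ln (1 - eta) / tFD;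
              ell = dHD / dFD
          in ell =
            (if lmin \<le> Lambda1 K w Ra Rb then
               (1 - real w * lmin * (1 / Rb + 1 / Ra)) / (1 - real w * lmin * (3 / Rb + 1 / Ra))
               * ((2 * (real K + 1) / Rb + real K * real w / Ra)
                  / ((real K + 1) / Rb + real K * real w / Ra))
             else if lmin \<le> Lambda2 K w Ra Rb then
               (1 - real w * lmin * (1 / Rb + 1 / Ra))
                 / (1 - real w * lmin * ((2 * real K - 1) / Rb + 1 / Ra))
               * ((2 * (real K + 1) / Rb + 2 * real w / Ra)
                  / ((real K + 1) / Rb + real K * real w / Ra))
             else
               2 * ((1 - real w * lmin * (real K / Rb + 1 / Ra))
                 / (1 - real w * lmin * ((2 * real K - 1) / Rb + 1 / Ra)))))"
proof -
  have Rb: "0 < Rb" using assms by linarith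
  let ?tH = "opt_val K w Ra Rb G_HD lmin"
  let ?tF = "opt_val K w Ra Rb G_FD lmin"
  have tH: "?tH = min (fH K w Ra Rb lmin 1) (fH K w Ra Rb lmin (real K - 1))"
    using opt_HD[OF assms(1,2,3) Rb assms(5,6,7)] .
  have tF: "?tF = min (fF K w Ra Rb lmin 0) (fF K w Ra Rb lmin (real K - 1))"
    using opt_FD[OF assms(1,2,3) Rb assms(5,6,8)] .
  have ln: "ln (1 - eta) \<noteq> 0" using assms by simp
  have ell: "(- ln (1 - eta) / ?tH) / (- ln (1 - eta) / ?tF) = ?tF / ?tH"
    using ln by (simp add: ratio_swap)
  have a: "0 < 1 / Rb" and b: "0 < 1 / Ra" using Rb assms by auto
  have k2: "2 \<le> real K" and w1: "1 \<le> real w" using assms by auto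
  note H = thrH[OF a b k2 w1 assms(6), folded fH_ab L1_ab[OF assms(3) Rb]]
  note F = thrF[OF a b k2 w1 assms(6), folded fF_ab L2_ab[OF assms(3) Rb]]
  have L12: "Lambda1 K w Ra Rb \<le> Lambda2 K w Ra Rb"
    unfolding L1_ab[OF assms(3) Rb] L2_ab[OF assms(3) Rb]
  proof (rule divide_left_mono)
    show "0 \<le> 1 / Ra" using b by simp
    show "(real K + 1) * (1 / Rb)\<^sup>2 + real w * (real K + 1) * (1 / Rb) * (1 / Ra) + real w * (1 / Ra)\<^sup>2
      \<le> 4 * (real K + 1) * (1 / Rb)\<^sup>2 + real w * (2 * real K + 3) * (1 / Rb) * (1 / Ra) + real w * (1 / Ra)\<^sup>2"
      using a b w1 k2 by (intro add_mono mult_right_mono) auto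
    show "0 < (4 * (real K + 1) * (1 / Rb)\<^sup>2 + real w * (2 * real K + 3) * (1 / Rb) * (1 / Ra) + real w * (1 / Ra)\<^sup>2) *
      ((real K + 1) * (1 / Rb)\<^sup>2 + real w * (real K + 1) * (1 / Rb) * (1 / Ra) + real w * (1 / Ra)\<^sup>2)"
      using a b w1 k2 by (intro mult_pos_pos add_pos_nonneg) auto
  qed
  have fFK: "fF K w Ra Rb lmin (real K - 1) = (1 - real w * lmin * (1 / Rb + 1 / Ra)) / ((real K + 1) / Rb + real K * real w / Ra)"
    unfolding fF_def by (simp add: algebra_simps)
  have fHK: "fH K w Ra Rb lmin (real K - 1) = (1 - real w * lmin * (3 / Rb + 1 / Ra)) / (2 * (real K + 1) / Rb + real K * real w / Ra)"
    unfolding fH_def by (simp add: algebra_simps)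
  have fH1: "fH K w Ra Rb lmin 1 = (1 - real w * lmin * ((2 * real K - 1) / Rb + 1 / Ra)) / (2 * (real K + 1) / Rb + 2 * real w / Ra)"
    unfolding fH_def by (simp add: algebra_simps)
  have fF0: "fF K w Ra Rb lmin 0 = (1 - real w * lmin * (real K / Rb + 1 / Ra)) / ((real K + 1) / Rb + real w / Ra)"
    unfolding fF_def by (simp add: algebra_simps)
  have "0 < (real K + 1) / Rb + real w / Ra" using Rb assms(3) by (intro add_pos_nonneg) auto
  then have D0: "(real K + 1) / Rb + real w / Ra \<noteq> 0" by simp
  have main: "?tF / ?tH = (if lmin \<le> Lambda1 K w Ra Rb then
               (1 - real w * lmin * (1 / Rb + 1 / Ra)) / (1 - real w * lmin * (3 / Rb + 1 / Ra))
               * ((2 * (real K + 1) / Rb + real K * real w / Ra)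
                  / ((real K + 1) / Rb + real K * real w / Ra))
             else if lmin \<le> Lambda2 K w Ra Rb then
               (1 - real w * lmin * (1 / Rb + 1 / Ra))
                 / (1 - real w * lmin * ((2 * real K - 1) / Rb + 1 / Ra))
               * ((2 * (real K + 1) / Rb + 2 * real w / Ra)
                  / ((real K + 1) / Rb + real K * real w / Ra))
             else
               2 * ((1 - real w * lmin * (real K / Rb + 1 / Ra))
                 / (1 - real w * lmin * ((2 * real K - 1) / Rb + 1 / Ra))))"
  proof (cases "lmin \<le> Lambda1 K w Ra Rb")
    case True
    then have "?tH = fH K w Ra Rb lmin (real K - 1)" using tH H(1) by simp
    moreover have "?tF = fF K w Ra Rb lmin (real K - 1)" using tF F(1) True L12 by simp
    ultimately show ?thesis using True unfolding fHK fFK ratio_swap by simp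
  next
    case False
    then have h: "?tH = fH K w Ra Rb lmin 1" using tH H(2) by simp
    show ?thesis
    proof (cases "lmin \<le> Lambda2 K w Ra Rb")
      case True
      then have "?tF = fF K w Ra Rb lmin (real K - 1)" using tF F(1) by simp
      then show ?thesis using True False h unfolding fH1 fFK ratio_swap by simp
    next
      case c: False
      then have "?tF = fF K w Ra Rb lmin 0" using tF F(2) by simp
      then have "?tF / ?tH = (1 - real w * lmin * (real K / Rb + 1 / Ra)) / (1 - real w * lmin * ((2 * real K - 1) / Rb + 1 / Ra))
          * ((2 * (real K + 1) / Rb + 2 * real w / Ra) / ((real K + 1) / Rb + real w / Ra))"
        using h unfolding fH1 fF0 ratio_swap by simp
      also have "(2 * (real K + 1) / Rb + 2 * real w / Ra) / ((real K + 1) / Rb + real w / Ra) = 2"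
        using D0 by (simp add: field_simps)
      finally show ?thesis using False c by simp
    qed
  qed
  show ?thesis unfolding Let_def using main ell by simp
qed

end
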